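(* For every cubic graph $G$ that contains a perfect matching, $\nu_2(G) \geq \frac{20}{21}\cdot \frac{|V(G)| + 2\cdot \nu_3(G)}{4}$.
   Context: Graphs are finite, without loops, possibly with multiple edges; a graph is cubic if every vertex has degree $3$. For $k\geq 1$, $\nu_k(G)$ is the maximum number of edges of a $k$-edge-colorable subgraph of $G$. *)

theory Defs
  imports Complex_Main
begin

text \<open>A finite multigraph without loops: vertex set V, edge set E (edges are
  abstract objects, so parallel edges are allowed), and an endpoint map
  assigning to each edge a set of exactly two vertices.\<close>

definition multigraph :: "'v set \<Rightarrow> 'e set \<Rightarrow> ('e \<Rightarrow> 'v set) \<Rightarrow> bool" where
  "multigraph V E ends \<longleftrightarrow> finite V \<and> finite E \<and>
     (\<forall>e\<in>E. ends e \<subseteq> V \<and> card (ends e) = 2)"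

definition degree :: "'e set \<Rightarrow> ('e \<Rightarrow> 'v set) \<Rightarrow> 'v \<Rightarrow> nat" where
  "degree E ends v = card {e\<in>E. v \<in> ends e}"

definition cubic :: "'v set \<Rightarrow> 'e set \<Rightarrow> ('e \<Rightarrow> 'v set) \<Rightarrow> bool" where
  "cubic V E ends \<longleftrightarrow> multigraph V E ends \<and> (\<forall>v\<in>V. degree E ends v = 3)"

definition perfect_matching :: "'v set \<Rightarrow> 'e set \<Rightarrow> ('e \<Rightarrow> 'v set) \<Rightarrow> 'e set \<Rightarrow> bool" where
  "perfect_matching V E ends M \<longleftrightarrow> M \<subseteq> E \<and>
     (\<forall>v\<in>V. card {e\<in>M. v \<in> ends e} = 1)"

definition edge_colorable :: "('e \<Rightarrow> 'v set) \<Rightarrow> nat \<Rightarrow> 'e set \<Rightarrow> bool" where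
  "edge_colorable ends k F \<longleftrightarrow> (\<exists>c :: 'e \<Rightarrow> nat.
     (\<forall>e\<in>F. c e < k) \<and>
     (\<forall>e\<in>F. \<forall>f\<in>F. e \<noteq> f \<and> ends e \<inter> ends f \<noteq> {} \<longrightarrow> c e \<noteq> c f))"

definition nu :: "nat \<Rightarrow> 'e set \<Rightarrow> ('e \<Rightarrow> 'v set) \<Rightarrow> nat" where
  "nu k E ends = Max {card F | F. F \<subseteq> E \<and> edge_colorable ends k F}"

end

theory Submission
  imports Defs
begin

lemma nu_attained:
  assumes "finite E"
  shows "\<exists>F. F \<subseteq> E \<and> edge_colorable ends k F \<and> card F = nu k E ends"
proof -
  let ?S = "{card F | F. F \<subseteq> E \<and> edge_colorable ends k F}"
  have fin: "finite ?S"
    by (rule finite_subset[of _ "{..card E}"]) (auto intro: card_mono assms)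
  have "edge_colorable ends k {}" by (auto simp: edge_colorable_def)
  hence ne: "?S \<noteq> {}" by blast
  show ?thesis using Max_in[OF fin ne] unfolding nu_def by auto
qed

lemma nu_ge:
  assumes "finite E" "F \<subseteq> E" "edge_colorable ends k F"
  shows "card F \<le> nu k E ends"
proof -
  let ?S = "{card F | F. F \<subseteq> E \<and> edge_colorable ends k F}"
  have fin: "finite ?S"
    by (rule finite_subset[of _ "{..card E}"]) (auto intro: card_mono assms)
  show ?thesis unfolding nu_def using assms by (intro Max_ge[OF fin]) auto
qed

lemma three_classes:
  assumes "finite F" "\<forall>e\<in>F. (c e::nat) < 3"
  shows "card F = card {e\<in>F. c e = 0} + card {e\<in>F. c e = 1} + card {e\<in>F. c e = 2}"
proof -
  have eq: "F = ({e\<in>F. c e = 0} \<union> {e\<in>F. c e = 1}) \<union> {e\<in>F. c e = 2}"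
    using assms(2) by force
  have "card (({e\<in>F. c e = 0} \<union> {e\<in>F. c e = 1}) \<union> {e\<in>F. c e = 2})
      = card ({e\<in>F. c e = 0} \<union> {e\<in>F. c e = 1}) + card {e\<in>F. c e = 2}"
    by (rule card_Un_disjoint) (use assms(1) in auto)
  also have "card ({e\<in>F. c e = 0} \<union> {e\<in>F. c e = 1}) = card {e\<in>F. c e = 0} + card {e\<in>F. c e = 1}"
    by (rule card_Un_disjoint) (use assms(1) in auto)
  finally show ?thesis using eq by simp
qed

lemma two_from_three:
  assumes "finite F" "edge_colorable ends 3 F"
  shows "\<exists>F2\<subseteq>F. edge_colorable ends 2 F2 \<and> 2 * card F \<le> 3 * card F2"
proof -
  obtain c :: "'a \<Rightarrow> nat" where c1: "\<forall>e\<in>F. c e < 3"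
    and c2: "\<forall>e\<in>F. \<forall>f\<in>F. e \<noteq> f \<and> ends e \<inter> ends f \<noteq> {} \<longrightarrow> c e \<noteq> c f"
    using assms(2) unfolding edge_colorable_def by blast
  define K where "K j = {e\<in>F. c e = j}" for j
  have sum: "card F = card (K 0) + card (K 1) + card (K 2)"
    unfolding K_def by (rule three_classes[OF assms(1) c1])
  obtain j where j: "j < 3" "3 * card (K j) \<le> card F"
  proof (cases "3 * card (K 0) \<le> card F")
    case True then show ?thesis using that[of 0] by auto
  next
    case F0: False
    show ?thesis
    proof (cases "3 * card (K 1) \<le> card F")
      case True then show ?thesis using that[of 1] by auto
    next
      case False then show ?thesis using that[of 2] F0 sum by auto
    qed
  qed
  define F2 where "F2 = F - K j"
  have sub: "K j \<subseteq> F" by (auto simp: K_def)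
  hence cardF2: "card F2 = card F - card (K j)"
    unfolding F2_def using assms(1) by (simp add: card_Diff_subset finite_subset)
  have "card (K j) \<le> card F" using sub assms(1) by (simp add: card_mono)
  have col: "edge_colorable ends 2 F2"
    unfolding edge_colorable_def
  proof (intro exI[of _ "\<lambda>e. if c e < j then c e else c e - 1"] conjI ballI impI)
    fix e assume "e \<in> F2"
    then show "(if c e < j then c e else c e - 1) < 2"
      using c1 j(1) by (auto simp: F2_def K_def)
  next
    fix e f assume ef: "e \<in> F2" "f \<in> F2" "e \<noteq> f \<and> ends e \<inter> ends f \<noteq> {}"
    then have "c e \<noteq> c f" "c e \<noteq> j" "c f \<noteq> j"
      using c2 by (auto simp: F2_def K_def)
    then show "(if c e < j then c e else c e - 1) \<noteq> (if c f < j then c f else c f - 1)"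
      by auto
  qed
  show ?thesis
    using col cardF2 j(2) \<open>card (K j) \<le> card F\<close> by (intro exI[of _ F2]) (auto simp: F2_def)
qed


lemma greedy3:
  assumes "finite F" "\<forall>e\<in>F. card {f\<in>F. f \<noteq> e \<and> ends e \<inter> ends f \<noteq> {}} \<le> 2"
  shows "edge_colorable ends 3 F"
  using assms
proof (induction F rule: finite_induct)
  case empty thus ?case by (auto simp: edge_colorable_def)
next
  case (insert x F)
  have "\<forall>e\<in>F. card {f\<in>F. f \<noteq> e \<and> ends e \<inter> ends f \<noteq> {}} \<le> 2"
  proof
    fix e assume "e \<in> F"
    have "card {f\<in>F. f \<noteq> e \<and> ends e \<inter> ends f \<noteq> {}}
        \<le> card {f\<in>insert x F. f \<noteq> e \<and> ends e \<inter> ends f \<noteq> {}}"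
      by (rule card_mono) (use insert(1) in auto)
    with insert(4) \<open>e\<in>F\<close> show "card {f\<in>F. f \<noteq> e \<and> ends e \<inter> ends f \<noteq> {}} \<le> 2"
      by force
  qed
  with insert.IH obtain c :: "'a \<Rightarrow> nat" where c1: "\<forall>e\<in>F. c e < 3"
    and c2: "\<forall>e\<in>F. \<forall>f\<in>F. e \<noteq> f \<and> ends e \<inter> ends f \<noteq> {} \<longrightarrow> c e \<noteq> c f"
    unfolding edge_colorable_def by blast
  let ?S = "{f\<in>F. f \<noteq> x \<and> ends x \<inter> ends f \<noteq> {}}"
  have "card ?S \<le> card {f\<in>insert x F. f \<noteq> x \<and> ends x \<inter> ends f \<noteq> {}}"
    by (rule card_mono) (use insert(1) in auto)
  with insert(4) have cS: "card ?S \<le> 2" by force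
  have "card (c ` ?S) \<le> 2" using cS card_image_le[of ?S c] insert(1) by force
  have "\<not> {0,1,2::nat} \<subseteq> c ` ?S"
  proof
    assume "{0,1,2::nat} \<subseteq> c ` ?S"
    hence "card {0,1,2::nat} \<le> card (c ` ?S)" by (rule card_mono[rotated]) (use insert(1) in auto)
    with \<open>card (c ` ?S) \<le> 2\<close> show False by simp
  qed
  then have "\<exists>col. col < 3 \<and> col \<notin> c ` ?S"
  proof -
    assume a: "\<not> {0,1,2::nat} \<subseteq> c ` ?S"
    show ?thesis
    proof (rule ccontr)
      assume "\<not> (\<exists>col. col < 3 \<and> col \<notin> c ` ?S)"
      hence "\<forall>col<3. col \<in> c ` ?S" by blast
      hence "0 \<in> c ` ?S" "1 \<in> c ` ?S" "2 \<in> c ` ?S" by auto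
      with a show False by auto
    qed
  qed
  then obtain col where col: "col < 3" "col \<notin> c ` ?S" by blast
  define c' where "c' = c(x := col)"
  show ?case unfolding edge_colorable_def
  proof (intro exI[of _ c'] conjI ballI impI)
    fix e assume "e \<in> insert x F" then show "c' e < 3" using c1 col by (auto simp: c'_def)
  next
    fix e f assume ef: "e \<in> insert x F" "f \<in> insert x F" "e \<noteq> f \<and> ends e \<inter> ends f \<noteq> {}"
    show "c' e \<noteq> c' f"
    proof (cases "e = x")
      case True
      then have "f \<in> ?S" using ef by auto
      then show ?thesis using True col ef insert(2) by (auto simp: c'_def)
    next
      case ex: False
      show ?thesis
      proof (cases "f = x")
        case True
        then have "e \<in> ?S" using ef ex by (auto simp: Int_commute)
        then have "c e \<noteq> col" using col by auto
        then show ?thesis using True ex ef by (auto simp: c'_def)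
      next
        case False
        then show ?thesis using ex ef c2 by (auto simp: c'_def)
      qed
    qed
  qed
qed

lemma handshake:
  assumes "finite V" "finite E" "\<forall>e\<in>E. ends e \<subseteq> V"
  shows "(\<Sum>v\<in>V. card {e\<in>E. v \<in> ends e}) = (\<Sum>e\<in>E. card (ends e))"
proof -
  have "(\<Sum>v\<in>V. card {e\<in>E. v \<in> ends e}) = (\<Sum>v\<in>V. \<Sum>e\<in>E. if v \<in> ends e then 1 else 0)"
    using assms(2) by (simp add: sum.inter_filter[symmetric])
  also have "\<dots> = (\<Sum>e\<in>E. \<Sum>v\<in>V. if v \<in> ends e then 1 else 0)"
    by (rule sum.swap)
  also have "\<dots> = (\<Sum>e\<in>E. card {v\<in>V. v \<in> ends e})"
    using assms(1) by (simp add: sum.inter_filter[symmetric])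
  also have "\<dots> = (\<Sum>e\<in>E. card (ends e))"
  proof (rule sum.cong)
    fix e assume "e \<in> E"
    then have "{v\<in>V. v \<in> ends e} = ends e" using assms(3) by auto
    then show "card {v\<in>V. v \<in> ends e} = card (ends e)" by simp
  qed simp
  finally show ?thesis .
qed


theorem theorem5:
  fixes V :: "'v set" and E :: "'e set" and ends :: "'e \<Rightarrow> 'v set"
  assumes "cubic V E ends"
    and "\<exists>M. perfect_matching V E ends M"
  shows "real (nu 2 E ends) \<ge> 20 / 21 * ((real (card V) + 2 * real (nu 3 E ends)) / 4)"
proof -
  have finV: "finite V" and finE: "finite E" and endsV: "\<forall>e\<in>E. ends e \<subseteq> V"
    and ends2: "\<forall>e\<in>E. card (ends e) = 2" and deg3: "\<forall>v\<in>V. card {e\<in>E. v \<in> ends e} = 3"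
    using assms(1) unfolding cubic_def multigraph_def degree_def by auto
  obtain M where ME: "M \<subseteq> E" and M1: "\<forall>v\<in>V. card {e\<in>M. v \<in> ends e} = 1"
    using assms(2) unfolding perfect_matching_def by blast
  have finM: "finite M" using ME finE finite_subset by blast
  have hsE: "(\<Sum>v\<in>V. card {e\<in>E. v \<in> ends e}) = (\<Sum>e\<in>E. card (ends e))"
    by (rule handshake[OF finV finE endsV])
  hence "3 * card V = 2 * card E" using deg3 ends2 by simp
  have hsM: "(\<Sum>v\<in>V. card {e\<in>M. v \<in> ends e}) = (\<Sum>e\<in>M. card (ends e))"
    by (rule handshake[OF finV finM]) (use endsV ME in auto)
  hence "card V = 2 * card M" using M1 ends2 ME by (simp add: subset_eq)
  define F where "F = E - M"
  have finF: "finite F" using finE by (simp add: F_def)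
  have cardF: "card F = card V"
    unfolding F_def using card_Diff_subset[OF finM ME] \<open>3 * card V = 2 * card E\<close>
      \<open>card V = 2 * card M\<close> by simp
  have degF: "card {f\<in>F. v \<in> ends f} = 2" if "v \<in> V" for v
  proof -
    have eq: "{f\<in>F. v \<in> ends f} = {f\<in>E. v \<in> ends f} - {f\<in>M. v \<in> ends f}"
      by (auto simp: F_def)
    have "{f\<in>M. v \<in> ends f} \<subseteq> {f\<in>E. v \<in> ends f}" using ME by auto
    moreover have "finite {f\<in>M. v \<in> ends f}" using finM by simp
    ultimately have "card {f\<in>F. v \<in> ends f} = card {f\<in>E. v \<in> ends f} - card {f\<in>M. v \<in> ends f}"
      unfolding eq by (rule card_Diff_subset[rotated])
    then show ?thesis using deg3 M1 that by simp
  qed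
  have conf: "\<forall>e\<in>F. card {f\<in>F. f \<noteq> e \<and> ends e \<inter> ends f \<noteq> {}} \<le> 2"
  proof
    fix e assume eF: "e \<in> F"
    then have "e \<in> E" by (simp add: F_def)
    then obtain u w where uw: "ends e = {u, w}" using ends2 by (metis card_2_iff)
    have uV: "u \<in> V" and wV: "w \<in> V" using endsV \<open>e\<in>E\<close> uw by auto
    have sub: "{f\<in>F. f \<noteq> e \<and> ends e \<inter> ends f \<noteq> {}}
        \<subseteq> ({f\<in>F. u \<in> ends f} - {e}) \<union> ({f\<in>F. w \<in> ends f} - {e})"
      using uw by auto
    have c1: "card ({f\<in>F. u \<in> ends f} - {e}) = 1" using degF[OF uV] eF uw by simp
    have c2: "card ({f\<in>F. w \<in> ends f} - {e}) = 1" using degF[OF wV] eF uw by simp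
    have "card {f\<in>F. f \<noteq> e \<and> ends e \<inter> ends f \<noteq> {}}
        \<le> card (({f\<in>F. u \<in> ends f} - {e}) \<union> ({f\<in>F. w \<in> ends f} - {e}))"
      by (rule card_mono[OF _ sub]) (use finF in simp)
    also have "\<dots> \<le> 2" using card_Un_le[of "{f\<in>F. u \<in> ends f} - {e}" "{f\<in>F. w \<in> ends f} - {e}"] c1 c2
      by simp
    finally show "card {f\<in>F. f \<noteq> e \<and> ends e \<inter> ends f \<noteq> {}} \<le> 2" .
  qed
  have "edge_colorable ends 3 F" by (rule greedy3[OF finF conf])
  then obtain c :: "'e \<Rightarrow> nat" where c1: "\<forall>e\<in>F. c e < 3"
    and c2: "\<forall>e\<in>F. \<forall>f\<in>F. e \<noteq> f \<and> ends e \<inter> ends f \<noteq> {} \<longrightarrow> c e \<noteq> c f"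
    unfolding edge_colorable_def by blast
  define K where "K j = {e\<in>F. c e = j}" for j
  have sum: "card F = card (K 0) + card (K 1) + card (K 2)"
    unfolding K_def by (rule three_classes[OF finF c1])
  obtain j where j: "card F \<le> 3 * card (K j)"
  proof (cases "card F \<le> 3 * card (K 0)")
    case True then show ?thesis using that[of 0] by auto
  next
    case F0: False
    show ?thesis
    proof (cases "card F \<le> 3 * card (K 1)")
      case True then show ?thesis using that[of 1] by auto
    next
      case False then show ?thesis using that[of 2] F0 sum by auto
    qed
  qed
  define H where "H = M \<union> K j"
  have KF: "K j \<subseteq> F" by (auto simp: K_def)
  have HE: "H \<subseteq> E" using ME KF by (auto simp: H_def F_def)
  have cardH: "card H = card M + card (K j)"
    unfolding H_def by (rule card_Un_disjoint) (use finM finF KF in \<open>auto simp: F_def finite_subset\<close>)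
  have colH: "edge_colorable ends 2 H"
    unfolding edge_colorable_def
  proof (intro exI[of _ "\<lambda>e. if e \<in> M then 0 else 1::nat"] conjI ballI impI)
    fix e assume "e \<in> H" show "(if e \<in> M then 0 else 1::nat) < 2" by simp
  next
    fix e f assume ef: "e \<in> H" "f \<in> H" "e \<noteq> f \<and> ends e \<inter> ends f \<noteq> {}"
    then obtain x where x: "x \<in> ends e" "x \<in> ends f" by auto
    have "e \<in> E" using ef HE by auto
    then have xV: "x \<in> V" using endsV x by auto
    show "(if e \<in> M then 0 else 1::nat) \<noteq> (if f \<in> M then 0 else 1)"
    proof (cases "e \<in> M")
      case True
      show ?thesis
      proof (cases "f \<in> M")
        case True
        have "card {g\<in>M. x \<in> ends g} = 1" using M1 xV by auto
        then obtain g where "{g\<in>M. x \<in> ends g} = {g}" by (rule card_1_singletonE)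
        moreover have "e \<in> {g\<in>M. x \<in> ends g}" "f \<in> {g\<in>M. x \<in> ends g}"
          using \<open>e\<in>M\<close> True x by auto
        ultimately have False using ef by auto
        then show ?thesis ..
      qed (use \<open>e \<in> M\<close> in simp)
    next
      case False
      show ?thesis
      proof (cases "f \<in> M")
        case False
        then have "e \<in> K j" "f \<in> K j" using \<open>e \<notin> M\<close> ef by (auto simp: H_def)
        then have "c e = c f" "e \<in> F" "f \<in> F" by (auto simp: K_def)
        then have False using c2 ef by blast
        then show ?thesis ..
      qed (use \<open>e \<notin> M\<close> in simp)
    qed
  qed
  have nu2H: "card H \<le> nu 2 E ends" by (rule nu_ge[OF finE HE colH])
  obtain F3 where F3: "F3 \<subseteq> E" "edge_colorable ends 3 F3" "card F3 = nu 3 E ends"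
    using nu_attained[OF finE] by blast
  have "finite F3" using F3(1) finE finite_subset by blast
  then obtain F2 where F2: "F2 \<subseteq> F3" "edge_colorable ends 2 F2" "2 * card F3 \<le> 3 * card F2"
    using two_from_three F3(2) by blast
  have "card F2 \<le> nu 2 E ends" by (rule nu_ge[OF finE _ F2(2)]) (use F2(1) F3(1) in auto)
  have A: "5 * card V \<le> 6 * nu 2 E ends"
    using nu2H cardH j cardF \<open>card V = 2 * card M\<close> by linarith
  have B: "2 * nu 3 E ends \<le> 3 * nu 2 E ends"
    using F2(3) F3(3) \<open>card F2 \<le> nu 2 E ends\<close> by linarith
  have A': "5 * real (card V) \<le> 6 * real (nu 2 E ends)" using A by (metis of_nat_le_iff of_nat_mult of_nat_numeral)
  have B': "2 * real (nu 3 E ends) \<le> 3 * real (nu 2 E ends)" using B by (metis of_nat_le_iff of_nat_mult of_nat_numeral)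
  show ?thesis using A' B' by (simp add: field_simps)
qed

end
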